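(* Let $\rho\ge1$, $n\ge1$, $\alpha,\beta>-1$. (i) If $\alpha>\beta$ and $\alpha+\beta\ge-1$, then $\max_{z\in\mathcal{E}_\rho}|P_n^{(\alpha,\beta)}(z)|=P_n^{(\alpha,\beta)}\big(\tfrac12(\rho+\rho^{-1})\big)$, and the maximum is attained only at $z=\tfrac12(\rho+\rho^{-1})$. (ii) If $\alpha<\beta$ and $\alpha+\beta\ge-1$, then $\max_{z\in\mathcal{E}_\rho}|P_n^{(\alpha,\beta)}(z)|=\big|P_n^{(\alpha,\beta)}\big(-\tfrac12(\rho+\rho^{-1})\big)\big|$, and the maximum is attained only at $z=-\tfrac12(\rho+\rho^{-1})$. (iii) If $\alpha=\beta\ge-\tfrac12$, then $\max_{z\in\mathcal{E}_\rho}|P_n^{(\alpha,\beta)}(z)|=\big|P_n^{(\alpha,\beta)}\big(\pm\tfrac12(\rho+\rho^{-1})\big)\big|$ (attained at both endpoints of the major axis); if moreover $\alpha=\beta>-\tfrac12$, the maximum is attained only at these two points.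
   Context: $P_n^{(\alpha,\beta)}$ is the Jacobi polynomial $2^{-n}\sum_{k=0}^n\binom{n+\alpha}{n-k}\binom{n+\beta}{k}(x-1)^k(x+1)^{n-k}$. The Bernstein ellipse is $\mathcal{E}_\rho=\{\tfrac12(u+u^{-1}): u=\rho e^{i\theta},\ 0\le\theta<2\pi\}$ for $\rho\ge1$ (foci $\pm1$, semi-axes $\tfrac12(\rho\pm\rho^{-1})$). *)

theory Defs
  imports "HOL-Analysis.Analysis"
begin

definition jacobiP :: "nat \<Rightarrow> real \<Rightarrow> real \<Rightarrow> complex \<Rightarrow> complex" where
  "jacobiP n a b z = (1 / 2 ^ n) * (\<Sum>k\<le>n.
      complex_of_real (((real n + a) gchoose (n - k)) * ((real n + b) gchoose k))
      * (z - 1) ^ k * (z + 1) ^ (n - k))"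

definition bernstein_ellipse :: "real \<Rightarrow> complex set" where
  "bernstein_ellipse \<rho> =
     {(u + inverse u) / 2 | u. \<exists>\<theta>. 0 \<le> \<theta> \<and> \<theta> < 2 * pi \<and> u = complex_of_real \<rho> * cis \<theta>}"

end

theory Submission
  imports Defs "HOL-Computational_Algebra.Polynomial"
begin

definition pa :: "real poly" where "pa = [:-1, 1:]"
definition pb :: "real poly" where "pb = [:1, 1:]"
definition pX :: "real poly" where "pX = [:0, 1:]"

definition Eop :: "nat \<Rightarrow> real poly \<Rightarrow> real poly" where
  "Eop n p = pX * pderiv p - smult (real n) p"

definition Tp :: "nat \<Rightarrow> nat \<Rightarrow> real poly" where
  "Tp n k = pa ^ (2*k) * pb ^ (2*(n-k))"

lemma pderiv_pa[simp]: "pderiv pa = 1" and pderiv_pb[simp]: "pderiv pb = 1" and pderiv_pX[simp]: "pderiv pX = 1"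
  by (simp_all add: pa_def pb_def pX_def pderiv_pCons one_pCons)

lemma pa_pb: "pa * pb = pX^2 - 1"
  by (simp add: pa_def pb_def pX_def power2_eq_square one_pCons)

lemma pa_plus_pb: "pa + pb = smult 2 pX"
  by (simp add: pa_def pb_def pX_def)

lemma pa_deriv_pow: "pa * pderiv (pa ^ p) = smult (real p) (pa ^ p)"
proof (cases p)
  case 0 then show ?thesis by simp
next
  case (Suc q) then show ?thesis unfolding Suc pderiv_power_Suc by (simp add: mult_ac)
qed

lemma pb_deriv_pow: "pb * pderiv (pb ^ p) = smult (real p) (pb ^ p)"
proof (cases p)
  case 0 then show ?thesis by simp
next
  case (Suc q) then show ?thesis unfolding Suc pderiv_power_Suc by (simp add: mult_ac)
qed

lemma ab_deriv_T0:
  "pa * pb * pderiv (pa ^ (2*k) * pb ^ (2*m)) = (smult (2*real k) pb + smult (2*real m) pa) * (pa ^ (2*k) * pb ^ (2*m))"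
proof -
  have "pa * pb * pderiv (pa ^ (2*k) * pb ^ (2*m)) =
      pb * (pa * pderiv (pa ^ (2*k))) * pb ^ (2*m) + pa * (pb * pderiv (pb ^ (2*m))) * pa ^ (2*k)"
    by (simp add: pderiv_mult distrib_left mult_ac)
  also have "\<dots> = (smult (2*real k) pb + smult (2*real m) pa) * (pa ^ (2*k) * pb ^ (2*m))"
    by (simp add: pa_deriv_pow pb_deriv_pow algebra_simps)
  finally show ?thesis .
qed


definition Lop :: "nat \<Rightarrow> real \<Rightarrow> real \<Rightarrow> real poly \<Rightarrow> real poly" where
  "Lop n d s p = (pa*pb) * Eop n (Eop n p) + (smult (2*d) pX + smult (s+1) (pX^2+1)) * Eop n p
      - smult (real n * (real n + s + 1)) ((pa*pb) * p)"

lemma Eop_T: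
  assumes "n = k + m"
  defines "t \<equiv> pa ^ (2*k) * pb ^ (2*m)"
  defines "W \<equiv> smult (2*real k) pb + smult (2*real m) pa"
  defines "R1 \<equiv> pX * W - smult (real n) (pa*pb)"
  shows "pa*pb*Eop n t = R1 * t"
proof -
  have "pa*pb*Eop n t = pX * (pa*pb*pderiv t) - smult (real n) (pa*pb*t)"
    by (simp add: Eop_def algebra_simps)
  also have "\<dots> = R1 * t" unfolding t_def ab_deriv_T0 W_def[symmetric] R1_def
    by (simp add: algebra_simps)
  finally show ?thesis .
qed

lemma pderiv_R1:
  assumes "n = k + m"
  shows "pderiv (pX * (smult (2*real k) pb + smult (2*real m) pa) - smult (real n) (pa*pb))
        = smult (2*real k) pb + smult (2*real m) pa"
proof -
  have "pderiv (pX * (smult (2*real k) pb + smult (2*real m) pa) - smult (real n) (pa*pb))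
     = pX * smult (2*real k + 2*real m) 1 + (smult (2*real k) pb + smult (2*real m) pa)
       - smult (real n) (pa + pb)"
    by (simp add: pderiv_diff pderiv_mult pderiv_add pderiv_smult algebra_simps smult_add_right smult_add_left)
  also have "\<dots> = smult (2*real k) pb + smult (2*real m) pa"
    unfolding pa_plus_pb using assms by (simp add: algebra_simps)
  finally show ?thesis .
qed


lemma Rbig_id:
  assumes "n = k + m"
  defines "W \<equiv> smult (2*real k) pb + smult (2*real m) pa"
  defines "R1 \<equiv> pX * W - smult (real n) (pa*pb)"
  shows "pX*W*(pa*pb + R1) - pX*(pa+pb)*R1 - smult (real n) (pa*pb*R1)
       + (smult (2*(al-be)) pX + smult (al+be+1) (pX^2+1)) * R1
       - smult (real n * (real n + (al+be) + 1)) ((pa*pb)^2)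
     = smult (real k * (real k + al)) (pb^4) - smult (real m * (real m + be) + real k * (real k + al)) (pa^2*pb^2)
       + smult (real m * (real m + be)) (pa^4)"
proof -
  have "poly (pX*W*(pa*pb + R1) - pX*(pa+pb)*R1 - smult (real n) (pa*pb*R1)
       + (smult (2*(al-be)) pX + smult (al+be+1) (pX^2+1)) * R1
       - smult (real n * (real n + (al+be) + 1)) ((pa*pb)^2)) x
     = poly (smult (real k * (real k + al)) (pb^4) - smult (real m * (real m + be) + real k * (real k + al)) (pa^2*pb^2)
       + smult (real m * (real m + be)) (pa^4)) x" for x
    unfolding W_def R1_def assms(1) by (simp add: pa_def pb_def pX_def algebra_simps power2_eq_square power4_eq_xxxx)
  then show ?thesis using poly_eq_poly_eq_iff by blast
qed


lemma Lop_T: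
  assumes "n = k + m"
  shows "(pa*pb)^2 * Lop n (al-be) (al+be) (pa ^ (2*k) * pb ^ (2*m)) =
    pa*pb*(smult (real k * (real k + al)) (pb^4) - smult (real m * (real m + be) + real k * (real k + al)) (pa^2*pb^2)
       + smult (real m * (real m + be)) (pa^4)) * (pa ^ (2*k) * pb ^ (2*m))"
proof -
  define t where "t = pa ^ (2*k) * pb ^ (2*m)"
  define W where "W = smult (2*real k) pb + smult (2*real m) pa"
  define R1 where "R1 = pX * W - smult (real n) (pa*pb)"
  define e where "e = Eop n t"
  have H1: "pa*pb*e = R1*t" unfolding e_def t_def R1_def W_def using Eop_T[OF assms] by simp
  have dT: "pa*pb*pderiv t = W * t" unfolding t_def W_def by (rule ab_deriv_T0)
  have dR1: "pderiv R1 = W" unfolding R1_def W_def by (rule pderiv_R1[OF assms])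
  have "pderiv (pa*pb*e) = pderiv (R1*t)" using H1 by simp
  then have H2: "pa*pb*pderiv e = R1 * pderiv t + t*W - e*(pa+pb)"
    by (simp add: pderiv_mult dR1 algebra_simps)
  have H3: "(pa*pb)^2 * Eop n e = (pX*W*(pa*pb + R1) - pX*(pa+pb)*R1 - smult (real n) (pa*pb*R1)) * t"
  proof -
    have "(pa*pb)^2 * Eop n e = pa*pb*pX*(pa*pb*pderiv e) - smult (real n) (pa*pb*(pa*pb*e))"
      by (simp add: Eop_def power2_eq_square algebra_simps)
    also have "\<dots> = pX*R1*(pa*pb*pderiv t) + pa*pb*pX*t*W - pX*(pa+pb)*(pa*pb*e) - smult (real n) (pa*pb*(R1*t))"
      unfolding H2 H1[symmetric] by (simp add: algebra_simps)
    also have "\<dots> = (pX*W*(pa*pb + R1) - pX*(pa+pb)*R1 - smult (real n) (pa*pb*R1)) * t"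
      unfolding dT H1 by (simp add: algebra_simps)
    finally show ?thesis .
  qed
  have "(pa*pb)^2 * Lop n (al-be) (al+be) t = pa*pb*((pa*pb)^2 * Eop n e)
      + (smult (2*(al-be)) pX + smult (al+be+1) (pX^2+1)) * (pa*pb*(pa*pb*e))
      - smult (real n * (real n + (al+be) + 1)) ((pa*pb)^2 * (pa*pb) * t)"
    unfolding Lop_def e_def by (simp add: power2_eq_square algebra_simps)
  also have "\<dots> = pa*pb*((pX*W*(pa*pb + R1) - pX*(pa+pb)*R1 - smult (real n) (pa*pb*R1)
       + (smult (2*(al-be)) pX + smult (al+be+1) (pX^2+1)) * R1
       - smult (real n * (real n + (al+be) + 1)) ((pa*pb)^2)) * t)"
    unfolding H3 H1 by (simp add: algebra_simps)
  also have "\<dots> = pa*pb*(smult (real k * (real k + al)) (pb^4) - smult (real m * (real m + be) + real k * (real k + al)) (pa^2*pb^2)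
       + smult (real m * (real m + be)) (pa^4)) * t"
    unfolding R1_def W_def Rbig_id[OF assms] by (simp add: algebra_simps)
  finally show ?thesis unfolding t_def .
qed


lemma Eop_add: "Eop n (p + q) = Eop n p + Eop n q"
  by (simp add: Eop_def pderiv_add algebra_simps smult_add_right smult_diff_right smult_add_left mult_smult_right mult_smult_left)
lemma Eop_smult: "Eop n (smult c p) = smult c (Eop n p)"
  by (simp add: Eop_def pderiv_smult algebra_simps smult_add_right smult_diff_right smult_add_left mult_smult_right mult_smult_left)
lemma Eop_0[simp]: "Eop n 0 = 0"
  by (simp add: Eop_def)
lemma Lop_add: "Lop n d s (p + q) = Lop n d s p + Lop n d s q"
  by (simp add: Lop_def Eop_add algebra_simps smult_add_right smult_diff_right smult_add_left mult_smult_right mult_smult_left)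
lemma Lop_smult: "Lop n d s (smult c p) = smult c (Lop n d s p)"
  by (simp add: Lop_def Eop_smult algebra_simps smult_add_right smult_diff_right smult_add_left mult_smult_right mult_smult_left)
lemma Lop_0[simp]: "Lop n d s 0 = 0"
  by (simp add: Lop_def)
lemma Lop_sum: "Lop n d s (\<Sum>k\<in>S. smult (f k) (g k)) = (\<Sum>k\<in>S. smult (f k) (Lop n d s (g k)))"
  by (induction S rule: infinite_finite_induct) (simp_all add: Lop_add Lop_smult)

lemma gb_step: "(a gchoose Suc j) * of_nat (Suc j) = (a gchoose j) * (a - of_nat j)"
  using gbinomial_absorption[of j a] gbinomial_absorb_comp[of a j] by (simp add: mult_ac)

definition Aco :: "nat \<Rightarrow> real \<Rightarrow> real \<Rightarrow> nat \<Rightarrow> real" where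
  "Aco n al be k = ((real n + al) gchoose (n - k)) * ((real n + be) gchoose k)"

lemma Aco_step:
  assumes "k < n"
  shows "Aco n al be (Suc k) * (real (Suc k) * (real (Suc k) + al)) = Aco n al be k * (real (n-k) * (real (n-k) + be))"
proof -
  obtain j where j: "n - k = Suc j" using assms by (metis Suc_diff_Suc)
  have nk: "n - Suc k = j" using j by simp
  have nj: "n = j + k + 1" using j assms by arith
  then have nr: "real n = real j + real k + 1" by simp
  have e1: "((real n + al) gchoose j) * (real (Suc k) + al) = ((real n + al) gchoose (n-k)) * real (n-k)"
    using gb_step[of "real n + al" j] j by (simp add: nr add_ac)
  have e2: "((real n + be) gchoose Suc k) * real (Suc k) = ((real n + be) gchoose k) * (real (n-k) + be)"
    using gb_step[of "real n + be" k] assms by (simp add: of_nat_diff)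
  show ?thesis unfolding Aco_def nk
  proof -
    have "((real n + al) gchoose j) * ((real n + be) gchoose Suc k) * (real (Suc k) * (real (Suc k) + al))
        = (((real n + al) gchoose j) * (real (Suc k) + al)) * (((real n + be) gchoose Suc k) * real (Suc k))"
      by (simp only: mult_ac)
    also have "\<dots> = (((real n + al) gchoose (n-k)) * real (n-k)) * (((real n + be) gchoose k) * (real (n-k) + be))"
      by (simp only: e1 e2)
    finally show "((real n + al) gchoose j) * ((real n + be) gchoose Suc k) * (real (Suc k) * (real (Suc k) + al)) =
        ((real n + al) gchoose (n - k)) * ((real n + be) gchoose k) * (real (n - k) * (real (n - k) + be))"
      by (simp only: mult_ac)
  qed
qed


definition Qp :: "nat \<Rightarrow> real \<Rightarrow> real \<Rightarrow> real poly" where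
  "Qp n al be = (\<Sum>k\<le>n. smult (Aco n al be k) (Tp n k))"

lemma sum_shift0: "(\<phi>::nat \<Rightarrow> 'a::comm_monoid_add) 0 = 0 \<Longrightarrow> (\<Sum>k<n. \<phi> (Suc k)) = (\<Sum>k\<le>n. \<phi> k)"
  by (induction n) auto

lemma sum_dropn: "(\<psi>::nat \<Rightarrow> 'a::comm_monoid_add) n = 0 \<Longrightarrow> (\<Sum>k<n. \<psi> k) = (\<Sum>k\<le>n. \<psi> k)"
  by (simp add: lessThan_Suc_atMost[symmetric])

lemma pa_nz[simp]: "pa \<noteq> 0" and pb_nz[simp]: "pb \<noteq> 0"
  by (simp_all add: pa_def pb_def)

lemma T_shift_b: "k < n \<Longrightarrow> pb^4 * Tp n (Suc k) = pa^2*pb^2 * Tp n k"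
proof -
  assume "k < n"
  then obtain j where j: "n - k = Suc j" by (metis Suc_diff_Suc)
  then have "n - Suc k = j" by simp
  then show ?thesis unfolding Tp_def using j
    by (simp add: power_add power_mult mult_ac power2_eq_square numeral_eq_Suc)
qed

lemma T_shift_a: "k < n \<Longrightarrow> pa^4 * Tp n k = pa^2*pb^2 * Tp n (Suc k)"
proof -
  assume "k < n"
  then obtain j where j: "n - k = Suc j" by (metis Suc_diff_Suc)
  then have "n - Suc k = j" by simp
  then show ?thesis unfolding Tp_def using j
    by (simp add: power_add power_mult mult_ac power2_eq_square numeral_eq_Suc)
qed

lemma Lop_Q: "Lop n (al-be) (al+be) (Qp n al be) = 0"
proof -
  define B where "B k = real k * (real k + al)" for k
  define C where "C k = real (n-k) * (real (n-k) + be)" for k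
  define A where "A k = Aco n al be k" for k
  have step: "k < n \<Longrightarrow> A (Suc k) * B (Suc k) = A k * C k" for k
    unfolding A_def B_def C_def using Aco_step by simp
  have LT: "k \<le> n \<Longrightarrow> (pa*pb)^2 * Lop n (al-be) (al+be) (Tp n k) =
      pa*pb*(smult (B k) (pb^4) - smult (C k + B k) (pa^2*pb^2) + smult (C k) (pa^4)) * Tp n k" for k
    unfolding Tp_def B_def C_def by (rule Lop_T) simp
  have "(pa*pb)^2 * Lop n (al-be) (al+be) (Qp n al be) = (\<Sum>k\<le>n. smult (A k) ((pa*pb)^2 * Lop n (al-be) (al+be) (Tp n k)))"
    unfolding Qp_def Lop_sum A_def by (simp add: sum_distrib_left mult_smult_right)
  also have "\<dots> = (\<Sum>k\<le>n. smult (A k) (pa*pb*(smult (B k) (pb^4) - smult (C k + B k) (pa^2*pb^2) + smult (C k) (pa^4)) * Tp n k))"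
    by (rule sum.cong) (simp_all add: LT)
  also have "\<dots> = pa*pb*((\<Sum>k\<le>n. smult (A k * B k) (pb^4 * Tp n k)) - (\<Sum>k\<le>n. smult (A k * (C k + B k)) (pa^2*pb^2 * Tp n k))
        + (\<Sum>k\<le>n. smult (A k * C k) (pa^4 * Tp n k)))"
    by (simp add: sum_distrib_left sum_subtractf[symmetric] sum.distrib[symmetric] algebra_simps smult_add_right smult_diff_right)
  also have "(\<Sum>k\<le>n. smult (A k * B k) (pb^4 * Tp n k)) = (\<Sum>k\<le>n. smult (A k * C k) (pa^2*pb^2 * Tp n k))"
  proof -
    have "(\<Sum>k\<le>n. smult (A k * B k) (pb^4 * Tp n k)) = (\<Sum>k<n. smult (A (Suc k) * B (Suc k)) (pb^4 * Tp n (Suc k)))"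
      by (rule sum_shift0[symmetric]) (simp add: B_def)
    also have "\<dots> = (\<Sum>k<n. smult (A k * C k) (pa^2*pb^2 * Tp n k))"
      by (rule sum.cong) (simp_all add: step T_shift_b)
    also have "\<dots> = (\<Sum>k\<le>n. smult (A k * C k) (pa^2*pb^2 * Tp n k))"
      by (rule sum_dropn) (simp add: C_def)
    finally show ?thesis .
  qed
  also have "(\<Sum>k\<le>n. smult (A k * C k) (pa^4 * Tp n k)) = (\<Sum>k\<le>n. smult (A k * B k) (pa^2*pb^2 * Tp n k))"
  proof -
    have "(\<Sum>k\<le>n. smult (A k * C k) (pa^4 * Tp n k)) = (\<Sum>k<n. smult (A k * C k) (pa^4 * Tp n k))"
      by (rule sum_dropn[symmetric]) (simp add: C_def)
    also have "\<dots> = (\<Sum>k<n. smult (A (Suc k) * B (Suc k)) (pa^2*pb^2 * Tp n (Suc k)))"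
      by (rule sum.cong) (simp_all add: step T_shift_a)
    also have "\<dots> = (\<Sum>k\<le>n. smult (A k * B k) (pa^2*pb^2 * Tp n k))"
      by (rule sum_shift0) (simp add: B_def)
    finally show ?thesis .
  qed
  finally have "(pa*pb)^2 * Lop n (al-be) (al+be) (Qp n al be) = 
     pa*pb*((\<Sum>k\<le>n. smult (A k * C k) (pa^2*pb^2 * Tp n k)) - (\<Sum>k\<le>n. smult (A k * (C k + B k)) (pa^2*pb^2 * Tp n k))
        + (\<Sum>k\<le>n. smult (A k * B k) (pa^2*pb^2 * Tp n k)))" .
  also have "\<dots> = 0"
    by (simp add: sum_subtractf[symmetric] sum.distrib[symmetric] algebra_simps smult_add_left smult_add_right)
  finally show ?thesis by simp
qed


lemma coeff_pX_0[simp]: "coeff (pX * r) 0 = 0" and coeff_pX_Suc[simp]: "coeff (pX * r) (Suc j) = coeff r j"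
  by (simp_all add: pX_def)

lemma coeff_Eop: "coeff (Eop n p) j = (real j - real n) * coeff p j"
  by (cases j) (simp_all add: Eop_def coeff_pderiv algebra_simps)

lemma coeff_ab_Suc2: "coeff (pa*pb*r) (Suc (Suc j)) = coeff r j - coeff r (Suc (Suc j))"
  by (simp add: pa_pb power2_eq_square algebra_simps)
lemma coeff_ab_1: "coeff (pa*pb*r) (Suc 0) = - coeff r (Suc 0)"
  by (simp add: pa_pb power2_eq_square algebra_simps)
lemma coeff_X21_Suc2: "coeff ((pX^2+1)*r) (Suc (Suc j)) = coeff r j + coeff r (Suc (Suc j))"
  by (simp add: power2_eq_square algebra_simps)
lemma coeff_X21_1: "coeff ((pX^2+1)*r) (Suc 0) = coeff r (Suc 0)"
  by (simp add: power2_eq_square algebra_simps numeral_eq_Suc)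

lemma coeff_Lop_Suc2:
  "coeff (Lop n d s p) (Suc (Suc j)) =
     ((real j - real n)^2 + (s+1)*(real j - real n) - real n * (real n + s + 1)) * coeff p j
   + 2*d*(real j + 1 - real n) * coeff p (Suc j)
   + (- ((real j + 2 - real n)^2) + (s+1)*(real j + 2 - real n) + real n * (real n + s + 1)) * coeff p (Suc (Suc j))"
  unfolding Lop_def coeff_diff coeff_smult distrib_right coeff_add mult_smult_left coeff_ab_Suc2 coeff_X21_Suc2 coeff_pX_Suc
  by (simp add: coeff_Eop power2_eq_square algebra_simps)

lemma coeff_Lop_1:
  "coeff (Lop n d s p) 1 =
     (- ((1 - real n)^2) + (s+1)*(1 - real n) + real n * (real n + s + 1)) * coeff p 1
   + 2*d*(0 - real n) * coeff p 0"
  unfolding Lop_def coeff_diff coeff_smult distrib_right coeff_add mult_smult_left One_nat_def coeff_ab_1 coeff_X21_1 coeff_pX_Suc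
  by (simp add: coeff_Eop power2_eq_square algebra_simps)

lemma Q_rec:
  fixes al be :: real and n :: nat
  defines "q \<equiv> coeff (Qp n al be)"
  shows "(2*real n - real j) * (real j + al + be + 1) * q j
       = 2*(al-be)*(real j + 1 - real n) * q (Suc j) + (real j + 2) * (2*real n + al + be - real j - 1) * q (Suc (Suc j))"
proof -
  have "coeff (Lop n (al-be) (al+be) (Qp n al be)) (Suc (Suc j)) = 0" by (simp add: Lop_Q)
  then show ?thesis unfolding coeff_Lop_Suc2 q_def by (simp add: power2_eq_square algebra_simps)
qed

lemma Q_rec1:
  fixes al be :: real and n :: nat
  defines "q \<equiv> coeff (Qp n al be)"
  shows "(2*real n + al + be) * q 1 = 2*(al-be)*real n * q 0"
proof -
  have "coeff (Lop n (al-be) (al+be) (Qp n al be)) 1 = 0" by (simp add: Lop_Q)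
  then show ?thesis unfolding coeff_Lop_1 q_def by (simp add: power2_eq_square algebra_simps)
qed


lemma gchoose_pos: fixes x :: real assumes "x > real k - 1" shows "(x gchoose k) > 0"
proof -
  have "(x gchoose k) = (\<Prod>i = 0..<k. (x - of_nat i) / of_nat (k - i))"
    by (rule gbinomial_altdef_of_nat)
  also have "\<dots> > 0"
  proof (rule prod_pos)
    fix i assume "i \<in> {0..<k}"
    then have "i < k" by simp
    then have "x - real i > 0" "real (k - i) > 0" using assms by (simp_all add: of_nat_diff)
    then show "(x - of_nat i) / of_nat (k - i) > 0" by simp
  qed
  finally show ?thesis .
qed

lemma Aco_pos: assumes "al > -1" "be > -1" "k \<le> n" shows "Aco n al be k > 0"
  unfolding Aco_def using assms by (intro mult_pos_pos gchoose_pos) (simp_all add: of_nat_diff)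

lemma deg_T: "degree (Tp n k) = 2*k + 2*(n-k)"
proof -
  have "degree (Tp n k) = degree (pa^(2*k)) + degree (pb^(2*(n-k)))"
    unfolding Tp_def by (rule degree_mult_eq) simp_all
  then show ?thesis by (simp add: pa_def pb_def degree_linear_power)
qed

lemma coeff_T_top: "k \<le> n \<Longrightarrow> coeff (Tp n k) (2*n) = 1"
proof -
  assume k: "k \<le> n"
  have "coeff (Tp n k) (degree (pa^(2*k)) + degree (pb^(2*(n-k)))) = 1"
    unfolding Tp_def coeff_mult_degree_sum by (simp add: pa_def pb_def degree_linear_power coeff_linear_power)
  moreover have "degree (pa^(2*k)) + degree (pb^(2*(n-k))) = 2*n" using k
    by (simp add: pa_def pb_def degree_linear_power)
  ultimately show ?thesis by simp
qed

lemma coeff_T_high: "k \<le> n \<Longrightarrow> j > 2*n \<Longrightarrow> coeff (Tp n k) j = 0"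
  by (rule coeff_eq_0) (simp add: deg_T)

lemma coeff_T_0: "coeff (Tp n k) 0 = 1"
  by (simp add: poly_0_coeff_0[symmetric] Tp_def pa_def pb_def)

lemma coeff_Q: "coeff (Qp n al be) j = (\<Sum>k\<le>n. Aco n al be k * coeff (Tp n k) j)"
  by (simp add: Qp_def coeff_sum)

lemma Q_top: "coeff (Qp n al be) (2*n) = (\<Sum>k\<le>n. Aco n al be k)"
  unfolding coeff_Q by (rule sum.cong) (simp_all add: coeff_T_top)
lemma Q_bot: "coeff (Qp n al be) 0 = (\<Sum>k\<le>n. Aco n al be k)"
  unfolding coeff_Q by (simp add: coeff_T_0)
lemma Q_high: "j > 2*n \<Longrightarrow> coeff (Qp n al be) j = 0"
  unfolding coeff_Q by (rule sum.neutral) (simp add: coeff_T_high)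
lemma sumA_pos: "al > -1 \<Longrightarrow> be > -1 \<Longrightarrow> (\<Sum>k\<le>n. Aco n al be k) > 0"
  by (rule sum_pos) (simp_all add: Aco_pos)


lemma Q_nonneg:
  fixes al be :: real
  assumes al: "al > -1" and be: "be > -1" and ab: "al \<ge> be" and s: "al + be \<ge> -1" and n: "n \<ge> 1"
  shows "coeff (Qp n al be) j \<ge> 0"
proof -
  define q where "q = coeff (Qp n al be)"
  have top: "q (2*n) > 0" unfolding q_def Q_top using sumA_pos[OF al be] .
  have bot: "q 0 > 0" unfolding q_def Q_bot using sumA_pos[OF al be] .
  have high: "j > 2*n \<Longrightarrow> q j = 0" for j unfolding q_def by (rule Q_high)
  have rec: "(2*real n - real j) * (real j + al + be + 1) * q j
       = 2*(al-be)*(real j + 1 - real n) * q (Suc j) + (real j + 2) * (2*real n + al + be - real j - 1) * q (Suc (Suc j))" for j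
    unfolding q_def by (rule Q_rec)
  have rec1: "(2*real n + al + be) * q 1 = 2*(al-be)*real n * q 0" unfolding q_def by (rule Q_rec1)
  have TD: "i \<le> n \<Longrightarrow> q (2*n - i) \<ge> 0 \<and> q (2*n - i + 1) \<ge> 0" for i
  proof (induction i)
    case 0 then show ?case using top high[of "2*n+1"] by simp
  next
    case (Suc i)
    then have IH: "q (2*n - i) \<ge> 0" "q (2*n - i + 1) \<ge> 0" by auto
    define j where "j = 2*n - Suc i"
    have jS: "Suc j = 2*n - i" "Suc (Suc j) = 2*n - i + 1" using Suc.prems by (simp_all add: j_def)
    have jr: "real j = 2*real n - real i - 1" using Suc.prems by (simp add: j_def of_nat_diff)
    have c1: "(2*real n - real j) * (real j + al + be + 1) > 0" using jr Suc.prems s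
      by (intro mult_pos_pos) (simp_all add: of_nat_diff)
    have t1: "2*(al-be)*(real j + 1 - real n) * q (Suc j) \<ge> 0"
      using ab jr Suc.prems IH unfolding jS by (intro mult_nonneg_nonneg) (simp_all add: of_nat_diff)
    have t2: "(real j + 2) * (2*real n + al + be - real j - 1) * q (Suc (Suc j)) \<ge> 0"
    proof (cases "i = 0")
      case True then have "q (Suc (Suc j)) = 0" unfolding jS using high by simp
      then show ?thesis by simp
    next
      case False then show ?thesis using jr s IH unfolding jS by (intro mult_nonneg_nonneg) simp_all
    qed
    have "(2*real n - real j) * (real j + al + be + 1) * q j \<ge> 0" using rec[of j] t1 t2 by simp
    then have "q j \<ge> 0" using c1 by (simp add: zero_le_mult_iff)
    then show ?case using IH jS by (simp add: j_def)
  qed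
  have BU: "Suc j \<le> n \<Longrightarrow> q j \<ge> 0 \<and> q (Suc j) \<ge> 0" for j
  proof (induction j)
    case 0
    have "(2*real n + al + be) > 0" using n s by simp
    moreover have "2*(al-be)*real n * q 0 \<ge> 0" using ab bot by simp
    ultimately have "(2*real n + al + be) > 0" "(2*real n + al + be) * q 1 \<ge> 0" using rec1 by simp_all
    then have "q 1 \<ge> 0" by (simp add: zero_le_mult_iff)
    then show ?case using bot by simp
  next
    case (Suc j)
    then have IH: "q j \<ge> 0" "q (Suc j) \<ge> 0" by auto
    have c: "(real j + 2) * (2*real n + al + be - real j - 1) > 0" using Suc.prems s
      by (intro mult_pos_pos) simp_all
    have "(2*real n - real j) * (real j + al + be + 1) * q j \<ge> 0"
      using Suc.prems s IH by (intro mult_nonneg_nonneg) simp_all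
    moreover have "- (2*(al-be)*(real j + 1 - real n) * q (Suc j)) \<ge> 0"
    proof -
      have "2*(al-be)*(real n - real j - 1) * q (Suc j) \<ge> 0" using ab Suc.prems IH
        by (intro mult_nonneg_nonneg) simp_all
      then show ?thesis by (simp add: algebra_simps)
    qed
    ultimately have "(real j + 2) * (2*real n + al + be - real j - 1) * q (Suc (Suc j)) \<ge> 0"
      using rec[of j] by linarith
    then have "q (Suc (Suc j)) \<ge> 0" using c by (simp add: zero_le_mult_iff)
    then show ?case using IH by simp
  qed
  show ?thesis
  proof (cases "j \<le> n")
    case True
    then show ?thesis using BU[of j] BU[of "j - 1"] n unfolding q_def[symmetric]
      by (cases j) auto
  next
    case False
    show ?thesis
    proof (cases "j \<le> 2*n")
      case True
      then have "2*n - (2*n - j) = j" by simp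
      then show ?thesis using TD[of "2*n - j"] False unfolding q_def[symmetric] by simp
    next
      case False then show ?thesis using high unfolding q_def[symmetric] by simp
    qed
  qed
qed


lemma Q_strict1:
  fixes al be :: real
  assumes al: "al > -1" and be: "be > -1" and ab: "al > be" and s: "al + be \<ge> -1" and n: "n \<ge> 1"
  shows "coeff (Qp n al be) (2*n - 1) > 0"
proof -
  define q where "q = coeff (Qp n al be)"
  have top: "q (2*n) > 0" unfolding q_def Q_top using sumA_pos[OF al be] .
  have high: "q (Suc (2*n)) = 0" unfolding q_def by (rule Q_high) simp
  define j where "j = 2*n - 1"
  have jS: "Suc j = 2*n" "Suc (Suc j) = Suc (2*n)" using n by (simp_all add: j_def)
  have jr: "real j = 2*real n - 1" using n by (simp add: j_def of_nat_diff)
  have "(2*real n - real j) * (real j + al + be + 1) * q j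
       = 2*(al-be)*(real j + 1 - real n) * q (Suc j) + (real j + 2) * (2*real n + al + be - real j - 1) * q (Suc (Suc j))"
    unfolding q_def by (rule Q_rec)
  then have "(2*real n + al + be) * q j = 2*(al-be)*real n * q (2*n)" unfolding jS high jr
    by (simp add: algebra_simps)
  moreover have "2*(al-be)*real n * q (2*n) > 0" using ab n top by simp
  moreover have "2*real n + al + be > 0" using n s by simp
  ultimately show ?thesis unfolding q_def[symmetric] j_def[symmetric]
    by (metis zero_less_mult_iff not_less_iff_gr_or_eq)
qed

lemma Q_strict2:
  fixes al be :: real
  assumes al: "al > -1" and be: "be > -1" and ab: "al = be" and s: "al + be > -1" and n: "n \<ge> 1"
  shows "coeff (Qp n al be) (2*n - 2) > 0"
proof -
  define q where "q = coeff (Qp n al be)"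
  have top: "q (2*n) > 0" unfolding q_def Q_top using sumA_pos[OF al be] .
  define j where "j = 2*n - 2"
  have jS: "Suc (Suc j) = 2*n" using n by (simp_all add: j_def)
  have jr: "real j = 2*real n - 2" using n by (simp add: j_def of_nat_diff)
  have "(2*real n - real j) * (real j + al + be + 1) * q j
       = 2*(al-be)*(real j + 1 - real n) * q (Suc j) + (real j + 2) * (2*real n + al + be - real j - 1) * q (Suc (Suc j))"
    unfolding q_def by (rule Q_rec)
  then have "(2 * (2*real n + al + be - 1)) * q j = (2*real n) * (al + be + 1) * q (2*n)" unfolding jS jr ab
    by (simp add: algebra_simps)
  moreover have "(2*real n) * (al + be + 1) * q (2*n) > 0" using s n top by simp
  moreover have "2 * (2*real n + al + be - 1) > 0" using n s by simp
  ultimately show ?thesis unfolding q_def[symmetric] j_def[symmetric]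
    by (metis zero_less_mult_iff not_less_iff_gr_or_eq)
qed


abbreviation mpc :: "real poly \<Rightarrow> complex poly" where "mpc \<equiv> map_poly complex_of_real"

lemma mpc_add: "mpc (p + q) = mpc p + mpc q"
  by (intro poly_eqI) (simp add: coeff_map_poly)
lemma mpc_smult: "mpc (smult c p) = smult (of_real c) (mpc p)"
  by (rule map_poly_smult) simp_all
lemma mpc_pCons: "mpc (pCons c p) = pCons (of_real c) (mpc p)"
  by (rule map_poly_pCons) simp
lemma mpc_mult: "mpc (p * q) = mpc p * mpc q"
proof (induction p)
  case 0 then show ?case by simp
next
  case (pCons a p)
  have "mpc (pCons a p * q) = mpc (smult a q + pCons 0 (p * q))" by simp
  also have "\<dots> = smult (of_real a) (mpc q) + pCons 0 (mpc p * mpc q)"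
    by (simp add: mpc_add mpc_smult mpc_pCons pCons.IH)
  also have "\<dots> = mpc (pCons a p) * mpc q" by (simp add: mpc_pCons)
  finally show ?case .
qed
lemma mpc_power: "mpc (p ^ k) = mpc p ^ k"
  by (induction k) (simp_all add: mpc_mult)
lemma mpc_sum: "mpc (\<Sum>k\<in>S. f k) = (\<Sum>k\<in>S. mpc (f k))"
  by (induction S rule: infinite_finite_induct) (simp_all add: mpc_add)

lemma poly_mpc_T: "poly (mpc (Tp n k)) u = (u - 1)^(2*k) * (u + 1)^(2*(n-k))"
  by (simp add: Tp_def mpc_mult mpc_power pa_def pb_def mpc_pCons add.commute)

lemma poly_as_sum_le:
  fixes p :: "complex poly"
  assumes "\<And>i. i > N \<Longrightarrow> coeff p i = 0"
  shows "poly p x = (\<Sum>i\<le>N. coeff p i * x ^ i)"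
proof -
  have d: "degree p \<le> N" using assms by (simp add: degree_le)
  have "poly p x = (\<Sum>i\<le>degree p. coeff p i * x ^ i)" by (rule poly_altdef)
  also have "\<dots> = (\<Sum>i\<le>N. coeff p i * x ^ i)"
    by (rule sum.mono_neutral_left) (auto simp: d intro: le_degree)
  finally show ?thesis .
qed

lemma Q_eval:
  "(\<Sum>k\<le>n. complex_of_real (Aco n al be k) * (u - 1)^(2*k) * (u + 1)^(2*(n-k)))
     = (\<Sum>j\<le>2*n. complex_of_real (coeff (Qp n al be) j) * u ^ j)"
proof -
  have "poly (mpc (Qp n al be)) u = (\<Sum>k\<le>n. complex_of_real (Aco n al be k) * (u - 1)^(2*k) * (u + 1)^(2*(n-k)))"
    unfolding Qp_def mpc_sum mpc_smult poly_sum by (simp add: poly_mpc_T mult_ac)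
  moreover have "poly (mpc (Qp n al be)) u = (\<Sum>j\<le>2*n. complex_of_real (coeff (Qp n al be) j) * u ^ j)"
    by (subst poly_as_sum_le[where N="2*n"]) (simp_all add: coeff_map_poly Q_high)
  ultimately show ?thesis by simp
qed

lemma jacobi_eval:
  assumes u: "u \<noteq> 0"
  shows "jacobiP n al be ((u + inverse u)/2) = (\<Sum>j\<le>2*n. complex_of_real (coeff (Qp n al be) j) * u ^ j) / (4*u)^n"
proof -
  have zm: "(u + inverse u)/2 - 1 = (u-1)^2 / (2*u)" using u by (simp add: field_simps power2_eq_square)
  have zp: "(u + inverse u)/2 + 1 = (u+1)^2 / (2*u)" using u by (simp add: field_simps power2_eq_square)
  have "jacobiP n al be ((u + inverse u)/2) = (1/2^n) * (\<Sum>k\<le>n. complex_of_real (Aco n al be k) * (u - 1)^(2*k) * (u + 1)^(2*(n-k)) / (2*u)^n)"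
    unfolding jacobiP_def zm zp Aco_def
  proof (intro arg_cong[where f="\<lambda>x. (1/2^n) * x"] sum.cong refl)
    fix k assume "k \<in> {..n}"
    then have k: "k \<le> n" by simp
    have "(2*u)^n = (2*u)^k * (2*u)^(n-k)" using k by (metis le_add_diff_inverse power_add)
    then show "complex_of_real (((real n + al) gchoose (n - k)) * ((real n + be) gchoose k)) * ((u - 1)\<^sup>2 / (2 * u)) ^ k * ((u + 1)\<^sup>2 / (2 * u)) ^ (n - k) =
         complex_of_real (((real n + al) gchoose (n - k)) * ((real n + be) gchoose k)) * (u - 1) ^ (2 * k) * (u + 1) ^ (2 * (n - k)) / (2 * u) ^ n"
      by (simp add: power_divide power_mult[symmetric] mult_ac)
  qed
  also have "\<dots> = (\<Sum>k\<le>n. complex_of_real (Aco n al be k) * (u - 1)^(2*k) * (u + 1)^(2*(n-k))) / (4*u)^n"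
  proof -
    have h4: "(2::complex)^n * 2^n = 4^n" by (simp flip: power_mult_distrib)
    show ?thesis by (simp add: sum_divide_distrib[symmetric] power_mult_distrib field_simps h4)
  qed
  finally show ?thesis unfolding Q_eval .
qed


lemma sum_bound:
  fixes c :: "nat \<Rightarrow> real" and u :: complex
  assumes "\<And>j. c j \<ge> 0" "cmod u = \<rho>"
  shows "cmod (\<Sum>j\<le>N. complex_of_real (c j) * u^j) \<le> (\<Sum>j\<le>N. c j * \<rho>^j)"
proof -
  have "cmod (\<Sum>j\<le>N. complex_of_real (c j) * u^j) \<le> (\<Sum>j\<le>N. cmod (complex_of_real (c j) * u^j))"
    by (rule norm_sum)
  also have "\<dots> = (\<Sum>j\<le>N. c j * \<rho>^j)" using assms by (simp add: norm_mult norm_power)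
  finally show ?thesis .
qed

lemma sum_aligned:
  fixes c :: "nat \<Rightarrow> real" and u :: complex
  assumes c: "\<And>j. c j \<ge> 0" and u: "cmod u = \<rho>" and ab: "a \<le> N" "b \<le> N" "a \<noteq> b"
    and eq: "cmod (\<Sum>j\<le>N. complex_of_real (c j) * u^j) = (\<Sum>j\<le>N. c j * \<rho>^j)"
  defines "t \<equiv> \<lambda>j. complex_of_real (c j) * u^j"
  shows "cmod (t a) *\<^sub>R t b = cmod (t b) *\<^sub>R t a"
proof -
  define R where "R = {..N} - {a} - {b}"
  have nt: "cmod (t j) = c j * \<rho>^j" for j using c u by (simp add: t_def norm_mult norm_power)
  have s1: "(\<Sum>j\<le>N. t j) = t a + t b + (\<Sum>j\<in>R. t j)"
    unfolding R_def using ab by (simp add: sum.remove[of "{..N}" a] sum.remove[of "{..N}-{a}" b] add_ac)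
  have s2: "(\<Sum>j\<le>N. c j * \<rho>^j) = cmod (t a) + cmod (t b) + (\<Sum>j\<in>R. cmod (t j))"
    unfolding R_def nt using ab by (simp add: sum.remove[of "{..N}" a] sum.remove[of "{..N}-{a}" b] add_ac)
  have "cmod (\<Sum>j\<le>N. t j) \<le> cmod (t a + t b) + cmod (\<Sum>j\<in>R. t j)" unfolding s1 by (rule norm_triangle_ineq)
  also have "cmod (\<Sum>j\<in>R. t j) \<le> (\<Sum>j\<in>R. cmod (t j))" by (rule norm_sum)
  finally have "cmod (t a) + cmod (t b) \<le> cmod (t a + t b)" using eq s2 unfolding t_def by simp
  moreover have "cmod (t a + t b) \<le> cmod (t a) + cmod (t b)" by (rule norm_triangle_ineq)
  ultimately have "cmod (t a + t b) = cmod (t a) + cmod (t b)" by simp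
  then show ?thesis using norm_triangle_eq by blast
qed

lemma aligned_shift:
  fixes u :: complex
  assumes ca: "ca > 0" and cb: "cb > 0" and u: "cmod u = \<rho>" and \<rho>: "\<rho> > 0"
    and al: "cmod (complex_of_real ca * u^(b+k)) *\<^sub>R (complex_of_real cb * u^b) = cmod (complex_of_real cb * u^b) *\<^sub>R (complex_of_real ca * u^(b+k))"
  shows "u^k = complex_of_real (\<rho>^k)"
proof -
  have u0: "u \<noteq> 0" using u \<rho> by auto
  have "complex_of_real (ca * \<rho>^(b+k) * cb) * u^b = complex_of_real (cb * \<rho>^b * ca) * u^(b+k)"
    using al u ca cb by (simp add: norm_mult norm_power scaleR_conv_of_real mult_ac)
  then have "complex_of_real (ca * cb * \<rho>^b) * (complex_of_real (\<rho>^k) * u^b) = complex_of_real (ca * cb * \<rho>^b) * (u^k * u^b)"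
    by (simp add: power_add mult_ac)
  moreover have "complex_of_real (ca * cb * \<rho>^b) \<noteq> 0" using ca cb \<rho> by simp
  ultimately have "complex_of_real (\<rho>^k) * u^b = u^k * u^b" using \<rho> u0 by auto
  then show ?thesis using u0 by simp
qed


lemma ellipse_param:
  assumes "z \<in> bernstein_ellipse \<rho>" "\<rho> > 0"
  obtains u where "cmod u = \<rho>" "z = (u + inverse u)/2"
proof -
  from assms obtain u \<theta> where "z = (u + inverse u)/2" "u = complex_of_real \<rho> * cis \<theta>"
    unfolding bernstein_ellipse_def by blast
  moreover then have "cmod u = \<rho>" using assms by (simp add: norm_mult)
  ultimately show ?thesis using that by blast
qed

lemma x0_in: "complex_of_real ((\<rho> + inverse \<rho>) / 2) \<in> bernstein_ellipse \<rho>"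
  unfolding bernstein_ellipse_def
  by (rule CollectI, rule exI[of _ "complex_of_real \<rho>"]) (auto intro!: exI[of _ 0] simp: pi_gt_zero)

lemma x0_in': "- complex_of_real ((\<rho> + inverse \<rho>) / 2) \<in> bernstein_ellipse \<rho>"
  unfolding bernstein_ellipse_def
proof (rule CollectI, rule exI[of _ "- complex_of_real \<rho>"], intro conjI exI[of _ pi])
  show "- complex_of_real ((\<rho> + inverse \<rho>) / 2) = (- complex_of_real \<rho> + inverse (- complex_of_real \<rho>)) / 2"
    by (simp add: field_simps)
qed (simp_all add: pi_gt_zero)

lemma ellipse_neg: assumes "z \<in> bernstein_ellipse \<rho>" shows "- z \<in> bernstein_ellipse \<rho>"
proof -
  from assms obtain u \<theta> where z: "z = (u + inverse u)/2" and u: "u = complex_of_real \<rho> * cis \<theta>"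
    and th: "0 \<le> \<theta>" "\<theta> < 2*pi"
    unfolding bernstein_ellipse_def by blast
  define \<theta>' where "\<theta>' = (if \<theta> < pi then \<theta> + pi else \<theta> - pi)"
  have th': "0 \<le> \<theta>'" "\<theta>' < 2*pi" using th by (auto simp: \<theta>'_def)
  have "cis \<theta>' = - cis \<theta>" by (simp add: \<theta>'_def cis.ctr complex_eq_iff)
  then have "- u = complex_of_real \<rho> * cis \<theta>'" using u by simp
  moreover have "- z = (- u + inverse (- u))/2" using z by (simp add: field_simps)
  ultimately show ?thesis unfolding bernstein_ellipse_def using th' by blast
qed

lemma core:
  fixes \<rho> al be :: real and n :: nat
  assumes \<rho>: "\<rho> \<ge> 1" and n: "n \<ge> 1" and al: "al > -1" and be: "be > -1" and ab: "al \<ge> be" and s: "al + be \<ge> -1"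
  defines "M \<equiv> (\<Sum>j\<le>2*n. coeff (Qp n al be) j * \<rho>^j) / (4*\<rho>)^n"
    and "x0 \<equiv> complex_of_real ((\<rho> + inverse \<rho>) / 2)"
  shows "jacobiP n al be x0 = complex_of_real M"
    and "\<And>z. z \<in> bernstein_ellipse \<rho> \<Longrightarrow> cmod (jacobiP n al be z) \<le> M"
    and "al > be \<Longrightarrow> z \<in> bernstein_ellipse \<rho> \<Longrightarrow> cmod (jacobiP n al be z) = M \<Longrightarrow> z = x0"
    and "al = be \<Longrightarrow> al + be > -1 \<Longrightarrow> z \<in> bernstein_ellipse \<rho> \<Longrightarrow> cmod (jacobiP n al be z) = M \<Longrightarrow> z = x0 \<or> z = - x0"
proof -
  define c where "c = coeff (Qp n al be)"
  have c0: "c j \<ge> 0" for j unfolding c_def using Q_nonneg[OF al be ab s n] .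
  have \<rho>0: "\<rho> > 0" using \<rho> by simp
  have Mpos: "(4*\<rho>)^n > 0" using \<rho>0 by simp
  show "jacobiP n al be x0 = complex_of_real M"
  proof -
    have x0e: "x0 = (complex_of_real \<rho> + inverse (complex_of_real \<rho>))/2" unfolding x0_def by simp
    have "jacobiP n al be x0 = (\<Sum>j\<le>2*n. complex_of_real (c j) * complex_of_real \<rho> ^ j) / (4*complex_of_real \<rho>)^n"
      unfolding x0e c_def by (rule jacobi_eval) (use \<rho>0 in simp)
    also have "\<dots> = complex_of_real M" unfolding M_def c_def by simp
    finally show ?thesis .
  qed
  have bnd: "cmod (jacobiP n al be z) * (4*\<rho>)^n = cmod (\<Sum>j\<le>2*n. complex_of_real (c j) * u ^ j)"
    if "cmod u = \<rho>" "z = (u + inverse u)/2" for z u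
  proof -
    have "u \<noteq> 0" using that \<rho>0 by auto
    then have "jacobiP n al be z = (\<Sum>j\<le>2*n. complex_of_real (c j) * u ^ j) / (4*u)^n"
      unfolding that(2) c_def by (rule jacobi_eval)
    then show ?thesis using that(1) Mpos \<rho>0 by (simp add: norm_divide norm_mult norm_power)
  qed
  have Mx: "M * (4*\<rho>)^n = (\<Sum>j\<le>2*n. c j * \<rho>^j)" unfolding M_def c_def using Mpos \<rho>0 by simp
  show le: "cmod (jacobiP n al be z) \<le> M" if zE: "z \<in> bernstein_ellipse \<rho>" for z
  proof -
    obtain u where u: "cmod u = \<rho>" "z = (u + inverse u)/2" using ellipse_param[OF zE \<rho>0] by blast
    have "cmod (jacobiP n al be z) * (4*\<rho>)^n \<le> M * (4*\<rho>)^n"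
      unfolding bnd[OF u] Mx by (rule sum_bound[OF c0 u(1)])
    then show ?thesis using Mpos by (meson mult_le_cancel_right_pos)
  qed
  have eqcase: "cmod (\<Sum>j\<le>2*n. complex_of_real (c j) * u ^ j) = (\<Sum>j\<le>2*n. c j * \<rho>^j)"
    if "cmod (jacobiP n al be z) = M" "cmod u = \<rho>" "z = (u + inverse u)/2" for z u
    using bnd[OF that(2,3)] that(1) Mx by simp
  show "z = x0" if "al > be" "z \<in> bernstein_ellipse \<rho>" "cmod (jacobiP n al be z) = M"
  proof -
    have zE: "z \<in> bernstein_ellipse \<rho>" using that(2) .
    obtain u where u: "cmod u = \<rho>" "z = (u + inverse u)/2" using ellipse_param[OF zE \<rho>0] by blast
    have E: "cmod (\<Sum>j\<le>2*n. complex_of_real (c j) * u ^ j) = (\<Sum>j\<le>2*n. c j * \<rho>^j)"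
      using eqcase[OF that(3) u] .
    have i: "2*n = (2*n-1) + 1" using n by simp
    have ca: "c (2*n) > 0" unfolding c_def Q_top using sumA_pos[OF al be] .
    have cb: "c (2*n-1) > 0" unfolding c_def using Q_strict1[OF al be that(1) s n] .
    have "cmod (complex_of_real (c (2*n)) * u^(2*n)) *\<^sub>R (complex_of_real (c (2*n-1)) * u^(2*n-1))
        = cmod (complex_of_real (c (2*n-1)) * u^(2*n-1)) *\<^sub>R (complex_of_real (c (2*n)) * u^(2*n))"
      by (rule sum_aligned[OF c0 u(1) _ _ _ E]) (use n in auto)
    then have "u^1 = complex_of_real (\<rho>^1)"
      using aligned_shift[OF ca cb u(1) \<rho>0, of "2*n-1" 1] i by simp
    then show ?thesis using u(2) unfolding x0_def by simp
  qed
  show "z = x0 \<or> z = - x0" if "al = be" "al + be > -1" "z \<in> bernstein_ellipse \<rho>" "cmod (jacobiP n al be z) = M"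
  proof -
    have zE: "z \<in> bernstein_ellipse \<rho>" using that(3) .
    obtain u where u: "cmod u = \<rho>" "z = (u + inverse u)/2" using ellipse_param[OF zE \<rho>0] by blast
    have E: "cmod (\<Sum>j\<le>2*n. complex_of_real (c j) * u ^ j) = (\<Sum>j\<le>2*n. c j * \<rho>^j)"
      using eqcase[OF that(4) u] .
    have i: "2*n = (2*n-2) + 2" using n by simp
    have ca: "c (2*n) > 0" unfolding c_def Q_top using sumA_pos[OF al be] .
    have cb: "c (2*n-2) > 0" unfolding c_def using Q_strict2[OF al be that(1,2) n] .
    have al2: "cmod (complex_of_real (c (2*n)) * u^(2*n)) *\<^sub>R (complex_of_real (c (2*n-2)) * u^(2*n-2))
        = cmod (complex_of_real (c (2*n-2)) * u^(2*n-2)) *\<^sub>R (complex_of_real (c (2*n)) * u^(2*n))"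
      by (rule sum_aligned[OF c0 u(1) _ _ _ E]) (use n in auto)
    have j2: "(2*n-2)+2 = 2*n" using n by simp
    have ca': "c ((2*n-2)+2) > 0" unfolding j2 by (rule ca)
    have al2': "cmod (complex_of_real (c ((2*n-2)+2)) * u^((2*n-2)+2)) *\<^sub>R (complex_of_real (c (2*n-2)) * u^(2*n-2))
        = cmod (complex_of_real (c (2*n-2)) * u^(2*n-2)) *\<^sub>R (complex_of_real (c ((2*n-2)+2)) * u^((2*n-2)+2))"
      unfolding j2 by (rule al2)
    have "u^2 = complex_of_real (\<rho>^2)"
      by (rule aligned_shift[OF ca' cb u(1) \<rho>0 al2'])
    then have "(u - complex_of_real \<rho>) * (u + complex_of_real \<rho>) = 0"
      by (simp add: algebra_simps power2_eq_square)
    then have "u = complex_of_real \<rho> \<or> u = - complex_of_real \<rho>" by (auto simp: add_eq_0_iff)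
    then show ?thesis using u(2) unfolding x0_def by (auto simp: field_simps)
  qed
qed


lemma jacobi_sym: "jacobiP n al be (- z) = (-1)^n * jacobiP n be al z"
proof -
  have "jacobiP n al be (- z) = (1/2^n) * (\<Sum>k\<le>n. complex_of_real (((real n + al) gchoose (n - k)) * ((real n + be) gchoose k))
      * ((-1)^n * ((z + 1)^k * (z - 1)^(n-k))))"
    unfolding jacobiP_def
  proof (intro arg_cong[where f="\<lambda>x. (1/2^n) * x"] sum.cong refl)
    fix k assume "k \<in> {..n}"
    then have k: "k \<le> n" by simp
    have a: "(- z - 1)^k = (-1)^k * (z+1)^k" by (simp flip: power_mult_distrib)
    have b: "(- z + 1)^(n-k) = (-1)^(n-k) * (z-1)^(n-k)" by (simp flip: power_mult_distrib)
    have c: "(-1::complex)^k * (-1)^(n-k) = (-1)^n" using k by (simp flip: power_add)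
    show "complex_of_real (((real n + al) gchoose (n - k)) * ((real n + be) gchoose k)) * (- z - 1) ^ k * (- z + 1) ^ (n - k) =
         complex_of_real (((real n + al) gchoose (n - k)) * ((real n + be) gchoose k)) * ((-1)^n * ((z + 1)^k * (z - 1)^(n-k)))"
      unfolding a b c[symmetric] by (simp add: mult_ac)
  qed
  also have "(\<Sum>k\<le>n. complex_of_real (((real n + al) gchoose (n - k)) * ((real n + be) gchoose k))
      * ((-1)^n * ((z + 1)^k * (z - 1)^(n-k)))) =
      (\<Sum>k\<le>n. complex_of_real (((real n + be) gchoose (n - k)) * ((real n + al) gchoose k))
      * ((-1)^n * ((z - 1)^k * (z + 1)^(n-k))))"
    by (rule sum.reindex_bij_witness[where i="\<lambda>k. n - k" and j="\<lambda>k. n - k"]) (auto simp: mult_ac)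
  finally show ?thesis unfolding jacobiP_def
    by (simp add: sum_distrib_left mult_ac)
qed

theorem mainTheorem4:
  fixes \<rho> \<alpha> \<beta> :: real and n :: nat
  assumes "\<rho> \<ge> 1" and "n \<ge> 1" and "\<alpha> > -1" and "\<beta> > -1"
  defines "E \<equiv> bernstein_ellipse \<rho>"
    and "x0 \<equiv> complex_of_real ((\<rho> + inverse \<rho>) / 2)"
  shows
   "(\<alpha> > \<beta> \<and> \<alpha> + \<beta> \<ge> -1 \<longrightarrow>
       x0 \<in> E
     \<and> (\<forall>z\<in>E. cmod (jacobiP n \<alpha> \<beta> z) \<le> Re (jacobiP n \<alpha> \<beta> x0))
     \<and> jacobiP n \<alpha> \<beta> x0 = complex_of_real (Re (jacobiP n \<alpha> \<beta> x0))
     \<and> (\<forall>z\<in>E. cmod (jacobiP n \<alpha> \<beta> z) = Re (jacobiP n \<alpha> \<beta> x0) \<longrightarrow> z = x0))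
  \<and> (\<alpha> < \<beta> \<and> \<alpha> + \<beta> \<ge> -1 \<longrightarrow>
       - x0 \<in> E
     \<and> (\<forall>z\<in>E. cmod (jacobiP n \<alpha> \<beta> z) \<le> cmod (jacobiP n \<alpha> \<beta> (- x0)))
     \<and> (\<forall>z\<in>E. cmod (jacobiP n \<alpha> \<beta> z) = cmod (jacobiP n \<alpha> \<beta> (- x0)) \<longrightarrow> z = - x0))
  \<and> (\<alpha> = \<beta> \<and> \<alpha> \<ge> -1/2 \<longrightarrow>
       x0 \<in> E \<and> - x0 \<in> E
     \<and> (\<forall>z\<in>E. cmod (jacobiP n \<alpha> \<beta> z) \<le> cmod (jacobiP n \<alpha> \<beta> x0))
     \<and> cmod (jacobiP n \<alpha> \<beta> (- x0)) = cmod (jacobiP n \<alpha> \<beta> x0))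
  \<and> (\<alpha> = \<beta> \<and> \<alpha> > -1/2 \<longrightarrow>
       (\<forall>z\<in>E. cmod (jacobiP n \<alpha> \<beta> z) = cmod (jacobiP n \<alpha> \<beta> x0) \<longrightarrow> z = x0 \<or> z = - x0))"
proof -
  have \<rho>0: "\<rho> > 0" using assms(1) by simp
  have x0E: "x0 \<in> E" "- x0 \<in> E" unfolding E_def x0_def by (rule x0_in, rule x0_in')
  have negE: "z \<in> E \<Longrightarrow> - z \<in> E" for z unfolding E_def by (rule ellipse_neg)
  have sym': "jacobiP n \<alpha> \<beta> w = (-1)^n * jacobiP n \<beta> \<alpha> (- w)" for w
    using jacobi_sym[of n \<alpha> \<beta> "- w"] by simp
  have P1: "\<alpha> > \<beta> \<and> \<alpha> + \<beta> \<ge> -1 \<longrightarrow>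
       x0 \<in> E
     \<and> (\<forall>z\<in>E. cmod (jacobiP n \<alpha> \<beta> z) \<le> Re (jacobiP n \<alpha> \<beta> x0))
     \<and> jacobiP n \<alpha> \<beta> x0 = complex_of_real (Re (jacobiP n \<alpha> \<beta> x0))
     \<and> (\<forall>z\<in>E. cmod (jacobiP n \<alpha> \<beta> z) = Re (jacobiP n \<alpha> \<beta> x0) \<longrightarrow> z = x0)"
  proof
    assume h: "\<alpha> > \<beta> \<and> \<alpha> + \<beta> \<ge> -1"
    note C = core[OF assms(1,2,3,4) _ conjunct2[OF h]]
    have ab: "\<alpha> \<ge> \<beta>" using h by simp
    show "x0 \<in> E
     \<and> (\<forall>z\<in>E. cmod (jacobiP n \<alpha> \<beta> z) \<le> Re (jacobiP n \<alpha> \<beta> x0))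
     \<and> jacobiP n \<alpha> \<beta> x0 = complex_of_real (Re (jacobiP n \<alpha> \<beta> x0))
     \<and> (\<forall>z\<in>E. cmod (jacobiP n \<alpha> \<beta> z) = Re (jacobiP n \<alpha> \<beta> x0) \<longrightarrow> z = x0)"
      using x0E C(1)[OF ab] C(2)[OF ab] C(3)[OF ab conjunct1[OF h]] unfolding E_def x0_def by auto
  qed
  have P2: "\<alpha> < \<beta> \<and> \<alpha> + \<beta> \<ge> -1 \<longrightarrow>
       - x0 \<in> E
     \<and> (\<forall>z\<in>E. cmod (jacobiP n \<alpha> \<beta> z) \<le> cmod (jacobiP n \<alpha> \<beta> (- x0)))
     \<and> (\<forall>z\<in>E. cmod (jacobiP n \<alpha> \<beta> z) = cmod (jacobiP n \<alpha> \<beta> (- x0)) \<longrightarrow> z = - x0)"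
  proof
    assume h: "\<alpha> < \<beta> \<and> \<alpha> + \<beta> \<ge> -1"
    have s': "\<beta> + \<alpha> \<ge> -1" using h by simp
    have ab: "\<beta> \<ge> \<alpha>" "\<beta> > \<alpha>" using h by auto
    note C = core[OF assms(1,2,4,3) ab(1) s']
    define M where "M = (\<Sum>j\<le>2*n. coeff (Qp n \<beta> \<alpha>) j * \<rho>^j) / (4*\<rho>)^n"
    have J0: "jacobiP n \<beta> \<alpha> x0 = complex_of_real M" using C(1) unfolding M_def x0_def .
    have bnd: "z \<in> E \<Longrightarrow> cmod (jacobiP n \<beta> \<alpha> z) \<le> M" for z using C(2) unfolding M_def E_def by blast
    have M0: "M \<ge> 0" using bnd[OF x0E(1)] norm_ge_zero[of "jacobiP n \<beta> \<alpha> x0"] by linarith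
    have nx0: "cmod (jacobiP n \<alpha> \<beta> (- x0)) = M"
      using jacobi_sym[of n \<alpha> \<beta> x0] J0 M0 by (simp add: norm_mult norm_power)
    have nz: "cmod (jacobiP n \<alpha> \<beta> z) = cmod (jacobiP n \<beta> \<alpha> (- z))" for z
      using sym'[of z] by (simp add: norm_mult norm_power)
    show "- x0 \<in> E
     \<and> (\<forall>z\<in>E. cmod (jacobiP n \<alpha> \<beta> z) \<le> cmod (jacobiP n \<alpha> \<beta> (- x0)))
     \<and> (\<forall>z\<in>E. cmod (jacobiP n \<alpha> \<beta> z) = cmod (jacobiP n \<alpha> \<beta> (- x0)) \<longrightarrow> z = - x0)"
    proof (intro conjI ballI impI)
      show "- x0 \<in> E" by (rule x0E(2))
    next
      fix z assume zE: "z \<in> E"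
      have "cmod (jacobiP n \<beta> \<alpha> (- z)) \<le> M" by (rule bnd[OF negE[OF zE]])
      then show "cmod (jacobiP n \<alpha> \<beta> z) \<le> cmod (jacobiP n \<alpha> \<beta> (- x0))"
        using nx0 nz[of z] by linarith
    next
      fix z assume zE: "z \<in> E" and z2: "cmod (jacobiP n \<alpha> \<beta> z) = cmod (jacobiP n \<alpha> \<beta> (- x0))"
      have mzE: "- z \<in> bernstein_ellipse \<rho>" using negE[OF zE] unfolding E_def .
      have "cmod (jacobiP n \<beta> \<alpha> (- z)) = M" using z2 nx0 nz[of z] by linarith
      then have "- z = complex_of_real ((\<rho> + inverse \<rho>) / 2)"
        using C(3)[OF ab(2) mzE] unfolding M_def by blast
      then have "- z = x0" unfolding x0_def .
      then show "z = - x0" by (metis minus_minus)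
    qed
  qed
  have P3: "\<alpha> = \<beta> \<and> \<alpha> \<ge> -1/2 \<longrightarrow>
       x0 \<in> E \<and> - x0 \<in> E
     \<and> (\<forall>z\<in>E. cmod (jacobiP n \<alpha> \<beta> z) \<le> cmod (jacobiP n \<alpha> \<beta> x0))
     \<and> cmod (jacobiP n \<alpha> \<beta> (- x0)) = cmod (jacobiP n \<alpha> \<beta> x0)"
  proof
    assume h: "\<alpha> = \<beta> \<and> \<alpha> \<ge> -1/2"
    have ab: "\<alpha> \<ge> \<beta>" and s: "\<alpha> + \<beta> \<ge> -1" using h by auto
    note C = core[OF assms(1,2,3,4) ab s]
    define M where "M = (\<Sum>j\<le>2*n. coeff (Qp n \<alpha> \<beta>) j * \<rho>^j) / (4*\<rho>)^n"
    have J0: "jacobiP n \<alpha> \<beta> x0 = complex_of_real M" using C(1) unfolding M_def x0_def .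
    have bnd: "z \<in> E \<Longrightarrow> cmod (jacobiP n \<alpha> \<beta> z) \<le> M" for z using C(2) unfolding M_def E_def by blast
    have M0: "M \<ge> 0" using bnd[OF x0E(1)] norm_ge_zero[of "jacobiP n \<alpha> \<beta> x0"] by linarith
    have nx0: "cmod (jacobiP n \<alpha> \<beta> x0) = M" using J0 M0 by simp
    have "cmod (jacobiP n \<alpha> \<beta> (- x0)) = cmod (jacobiP n \<alpha> \<beta> x0)"
      using jacobi_sym[of n \<alpha> \<beta> x0] h by (simp add: norm_mult norm_power)
    then show "x0 \<in> E \<and> - x0 \<in> E
     \<and> (\<forall>z\<in>E. cmod (jacobiP n \<alpha> \<beta> z) \<le> cmod (jacobiP n \<alpha> \<beta> x0))
     \<and> cmod (jacobiP n \<alpha> \<beta> (- x0)) = cmod (jacobiP n \<alpha> \<beta> x0)"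
      using x0E bnd unfolding nx0 by blast
  qed
  have P4: "\<alpha> = \<beta> \<and> \<alpha> > -1/2 \<longrightarrow>
       (\<forall>z\<in>E. cmod (jacobiP n \<alpha> \<beta> z) = cmod (jacobiP n \<alpha> \<beta> x0) \<longrightarrow> z = x0 \<or> z = - x0)"
  proof
    assume h: "\<alpha> = \<beta> \<and> \<alpha> > -1/2"
    have ab: "\<alpha> \<ge> \<beta>" "\<alpha> = \<beta>" and s: "\<alpha> + \<beta> \<ge> -1" "\<alpha> + \<beta> > -1" using h by auto
    note C = core[OF assms(1,2,3,4) ab(1) s(1)]
    define M where "M = (\<Sum>j\<le>2*n. coeff (Qp n \<alpha> \<beta>) j * \<rho>^j) / (4*\<rho>)^n"
    have J0: "jacobiP n \<alpha> \<beta> x0 = complex_of_real M" using C(1) unfolding M_def x0_def .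
    have bnd: "z \<in> E \<Longrightarrow> cmod (jacobiP n \<alpha> \<beta> z) \<le> M" for z using C(2) unfolding M_def E_def by blast
    have M0: "M \<ge> 0" using bnd[OF x0E(1)] norm_ge_zero[of "jacobiP n \<alpha> \<beta> x0"] by linarith
    have nx0: "cmod (jacobiP n \<alpha> \<beta> x0) = M" using J0 M0 by simp
    show "\<forall>z\<in>E. cmod (jacobiP n \<alpha> \<beta> z) = cmod (jacobiP n \<alpha> \<beta> x0) \<longrightarrow> z = x0 \<or> z = - x0"
      unfolding nx0 using C(4)[OF ab(2) s(2)] unfolding M_def E_def x0_def by blast
  qed
  show ?thesis using P1 P2 P3 P4 by blast
qed

end
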